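(* Let $n\ge 2$, $p=n-1$, and let $m_0,\dots,m_p,m_n$ and the integers $q,r,q_z,r_z,\varepsilon,\upsilon,w$ be as in the context. Let $I\subseteq K[x_0,\dots,x_n]$ ($K$ a field) be the monomial ideal generated by $x_ix_p^{q}$ for $r\le i\le p$; $x_jx_p^{\,q-q_z-\varepsilon}x_n^{\upsilon-w}$ for $\varepsilon p+r-r_z\le j\le p$; $x_n^{\upsilon}$; $x_ix_j$ for $1\le i\le j\le p-1$. (This ideal $I$ is the initial ideal $\mathrm{in}(P)$ of the defining ideal $P$ of the monomial curve $x_i=t^{m_i}$, i.e. $P=\ker(K[x_0,\dots,x_n]\to K[t],\ x_i\mapsto t^{m_i})$, with respect to the grevlex order with $x_0<x_1<\dots<x_n$ refined by the grading $\mathrm{wt}(x_i)=m_i$.) Then $I$ is Ratliff-Rush closed, i.e. $\widetilde{I}=I$.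
   Context: Ratliff-Rush closure: for an ideal $I$ of a commutative Noetherian ring $R$ containing a nonzerodivisor, $\widetilde I=\bigcup_{k\ge1}(I^{k+1}:I^k)$, where $I^{k+1}:I^k=\{x\in R: xI^k\subseteq I^{k+1}\}$; $I$ is Ratliff-Rush closed if $\widetilde I=I$. Setup: $n\ge2$, $p=n-1$; $m_0<m_1<\dots<m_p$ are positive integers forming an arithmetic sequence, $m_n$ is an arbitrary positive integer, $\gcd(m_0,\dots,m_n)=1$, and $m_0,\dots,m_p,m_n$ minimally generate the numerical semigroup $\Gamma=\sum_{i=0}^n\mathbb N_0m_i$. Put $\Gamma'=\sum_{i=0}^p\mathbb N_0 m_i$. For an integer $t\ge0$ define $q_t\in\mathbb Z$, $r_t\in[1,p]$ by $t=q_tp+r_t$, and $g_t=q_tm_p+m_{r_t}\in\Gamma'$. Let $S=\{\gamma\in\Gamma:\gamma-m_0\notin\Gamma\}$, $u=\min\{t\ge0: g_t\notin S\}$, $\upsilon=\min\{b\ge1: bm_n\in\Gamma'\}$. There are unique integers $w\in[0,\upsilon-1]$, $z\in[0,u-1]$, $\lambda\ge1$, $\mu\ge0$ with $g_u=\lambda m_0+wm_n$ and $\upsilon m_n=\mu m_0+g_z$. Set $q=q_u$, $r=r_u$, and $\varepsilon=0$ if $r>r_z$, $\varepsilon=1$ if $r\le r_z$. *)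

theory Defs
  imports Main "HOL-Library.Poly_Mapping"
begin

type_synonym 'k mpoly = "(nat \<Rightarrow>\<^sub>0 nat) \<Rightarrow>\<^sub>0 'k"

definition polyring :: "nat \<Rightarrow> 'k::field mpoly set" where
  "polyring n = {f. \<forall>e \<in> Poly_Mapping.keys f. Poly_Mapping.keys e \<subseteq> {0..n}}"

definition var :: "nat \<Rightarrow> 'k::field mpoly" where
  "var i = Poly_Mapping.single (Poly_Mapping.single i 1) 1"

definition is_ideal :: "'a::comm_ring_1 set \<Rightarrow> 'a set \<Rightarrow> bool" where
  "is_ideal R J \<longleftrightarrow> J \<subseteq> R \<and> 0 \<in> J \<and> (\<forall>a\<in>J. \<forall>b\<in>J. a + b \<in> J)
      \<and> (\<forall>r\<in>R. \<forall>a\<in>J. r * a \<in> J)"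

definition ideal_gen :: "'a::comm_ring_1 set \<Rightarrow> 'a set \<Rightarrow> 'a set" where
  "ideal_gen R G = \<Inter> {J. is_ideal R J \<and> G \<subseteq> J}"

definition ideal_pow :: "'a::comm_ring_1 set \<Rightarrow> 'a set \<Rightarrow> nat \<Rightarrow> 'a set" where
  "ideal_pow R I k = ideal_gen R {prod_list xs | xs. length xs = k \<and> set xs \<subseteq> I}"

definition colon :: "'a::comm_ring_1 set \<Rightarrow> 'a set \<Rightarrow> 'a set \<Rightarrow> 'a set" where
  "colon R J L = {x \<in> R. \<forall>y \<in> L. x * y \<in> J}"

definition ratliff_rush :: "'a::comm_ring_1 set \<Rightarrow> 'a set \<Rightarrow> 'a set" where
  "ratliff_rush R I = (\<Union>k\<in>{1..}. colon R (ideal_pow R I (k+1)) (ideal_pow R I k))"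

definition in_sg :: "(nat \<Rightarrow> nat) \<Rightarrow> nat set \<Rightarrow> int \<Rightarrow> bool" where
  "in_sg m A x \<longleftrightarrow> (\<exists>c :: nat \<Rightarrow> nat. x = int (\<Sum>i\<in>A. c i * m i))"

text \<open>t = q_t p + r_t with r_t in [1,p].\<close>
definition qq :: "nat \<Rightarrow> nat \<Rightarrow> int" where
  "qq p t = (int t - 1) div int p"

definition rr :: "nat \<Rightarrow> nat \<Rightarrow> nat" where
  "rr p t = nat ((int t - 1) mod int p) + 1"

definition gg :: "(nat \<Rightarrow> nat) \<Rightarrow> nat \<Rightarrow> nat \<Rightarrow> int" where
  "gg m p t = qq p t * int (m p) + int (m (rr p t))"

definition apery :: "(nat \<Rightarrow> nat) \<Rightarrow> nat \<Rightarrow> int set" where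
  "apery m n = {\<gamma>. in_sg m {0..n} \<gamma> \<and> \<not> in_sg m {0..n} (\<gamma> - int (m 0))}"

definition uu :: "(nat \<Rightarrow> nat) \<Rightarrow> nat \<Rightarrow> nat" where
  "uu m n = (LEAST t. gg m (n - 1) t \<notin> apery m n)"

definition upsilon :: "(nat \<Rightarrow> nat) \<Rightarrow> nat \<Rightarrow> nat" where
  "upsilon m n = (LEAST b. b \<ge> 1 \<and> in_sg m {0..n-1} (int (b * m n)))"

end

theory Submission
  imports Defs
begin



abbreviation mon :: "(nat \<Rightarrow>\<^sub>0 nat) \<Rightarrow> 'k::field mpoly" where
  "mon e \<equiv> Poly_Mapping.single e 1"

definition mdvd :: "(nat \<Rightarrow>\<^sub>0 nat) \<Rightarrow> (nat \<Rightarrow>\<^sub>0 nat) \<Rightarrow> bool" where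
  "mdvd g e \<longleftrightarrow> (\<forall>i. Poly_Mapping.lookup g i \<le> Poly_Mapping.lookup e i)"

definition MI :: "nat \<Rightarrow> (nat \<Rightarrow>\<^sub>0 nat) set \<Rightarrow> 'k::field mpoly set" where
  "MI n Gx = {f \<in> polyring n. \<forall>e\<in>Poly_Mapping.keys f. \<exists>g\<in>Gx. mdvd g e}"

lemma is_idealI: "J \<subseteq> R \<Longrightarrow> 0 \<in> J \<Longrightarrow> (\<And>a b. a \<in> J \<Longrightarrow> b \<in> J \<Longrightarrow> a + b \<in> J)
  \<Longrightarrow> (\<And>r a. r \<in> R \<Longrightarrow> a \<in> J \<Longrightarrow> r * a \<in> J) \<Longrightarrow> is_ideal R J"
  unfolding is_ideal_def by blast

lemma polyring_add: "a \<in> polyring n \<Longrightarrow> b \<in> polyring n \<Longrightarrow> a + b \<in> polyring n"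
proof -
  assume a: "a \<in> polyring n" and b: "b \<in> polyring n"
  have "\<forall>e\<in>Poly_Mapping.keys (a + b). Poly_Mapping.keys e \<subseteq> {0..n}"
  proof
    fix e assume "e \<in> Poly_Mapping.keys (a + b)"
    then have "e \<in> Poly_Mapping.keys a \<union> Poly_Mapping.keys b" using keys_add[of a b] by (rule rev_subsetD)
    then show "Poly_Mapping.keys e \<subseteq> {0..n}" using a b unfolding polyring_def by blast
  qed
  then show ?thesis unfolding polyring_def by (rule CollectI)
qed

lemma polyring_mult: "a \<in> polyring n \<Longrightarrow> b \<in> polyring n \<Longrightarrow> a * b \<in> polyring n"
proof -
  assume a: "a \<in> polyring n" and b: "b \<in> polyring n"
  have "\<forall>e\<in>Poly_Mapping.keys (a * b). Poly_Mapping.keys e \<subseteq> {0..n}"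
  proof
    fix e assume "e \<in> Poly_Mapping.keys (a * b)"
    then have "e \<in> {x + y | x y. x \<in> Poly_Mapping.keys a \<and> y \<in> Poly_Mapping.keys b}"
      using keys_mult[of a b] by (rule rev_subsetD)
    then obtain x y where xy: "e = x + y" "x \<in> Poly_Mapping.keys a" "y \<in> Poly_Mapping.keys b" by blast
    have "Poly_Mapping.keys x \<subseteq> {0..n}" "Poly_Mapping.keys y \<subseteq> {0..n}"
      using a b xy(2,3) unfolding polyring_def by blast+
    then show "Poly_Mapping.keys e \<subseteq> {0..n}" using keys_add[of x y] xy(1) by blast
  qed
  then show ?thesis unfolding polyring_def by (rule CollectI)
qed

lemma polyring_zero: "0 \<in> polyring n" unfolding polyring_def by simp

lemma is_ideal_R: "is_ideal (polyring n) (polyring n)"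
  by (rule is_idealI) (auto intro: polyring_add polyring_mult polyring_zero)

lemma ideal_gen_ideal:
  assumes "G \<subseteq> R" "is_ideal R R"
  shows "is_ideal R (ideal_gen R G)"
proof -
  let ?F = "{J. is_ideal R J \<and> G \<subseteq> J}"
  have ne: "R \<in> ?F" using assms by auto
  have 1: "\<Inter> ?F \<subseteq> R" using ne by blast
  have 2: "0 \<in> \<Inter> ?F" unfolding is_ideal_def by blast
  have 3: "\<forall>a\<in>\<Inter> ?F. \<forall>b\<in>\<Inter> ?F. a + b \<in> \<Inter> ?F"
  proof (intro ballI InterI)
    fix a b J assume "a \<in> \<Inter> ?F" "b \<in> \<Inter> ?F" "J \<in> ?F"
    then have "a \<in> J" "b \<in> J" "is_ideal R J" by auto
    then show "a + b \<in> J" unfolding is_ideal_def by blast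
  qed
  have 4: "\<forall>r\<in>R. \<forall>a\<in>\<Inter> ?F. r * a \<in> \<Inter> ?F"
  proof (intro ballI InterI)
    fix r a J assume "r \<in> R" "a \<in> \<Inter> ?F" "J \<in> ?F"
    then have "a \<in> J" "r \<in> R" "is_ideal R J" by auto
    then show "r * a \<in> J" unfolding is_ideal_def by blast
  qed
  show ?thesis unfolding ideal_gen_def using 1 2 3 4 by (intro is_idealI) auto
qed

lemma ideal_gen_sup: "G \<subseteq> ideal_gen R G"
  unfolding ideal_gen_def by blast

lemma ideal_gen_min: "is_ideal R J \<Longrightarrow> G \<subseteq> J \<Longrightarrow> ideal_gen R G \<subseteq> J"
  unfolding ideal_gen_def by blast

lemma ideal_mult: "is_ideal R J \<Longrightarrow> r \<in> R \<Longrightarrow> a \<in> J \<Longrightarrow> r * a \<in> J"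
  unfolding is_ideal_def by blast

lemma ideal_add: "is_ideal R J \<Longrightarrow> a \<in> J \<Longrightarrow> b \<in> J \<Longrightarrow> a + b \<in> J"
  unfolding is_ideal_def by blast

lemma ideal_zero: "is_ideal R J \<Longrightarrow> 0 \<in> J"
  unfolding is_ideal_def by blast

lemma ideal_sum:
  assumes J: "is_ideal R J" and h: "\<forall>x\<in>A. h x \<in> J"
  shows "sum h A \<in> J"
proof (cases "finite A")
  case True
  then show ?thesis using h
  proof (induction A rule: finite_induct)
    case empty
    then show ?case using ideal_zero[OF J] by simp
  next
    case (insert x F)
    then have "h x \<in> J" "sum h F \<in> J" by simp_all
    then have "h x + sum h F \<in> J" by (rule ideal_add[OF J])
    then show ?case using insert(1,2) by simp
  qed
next
  case False
  then show ?thesis using ideal_zero[OF J] by simp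
qed

lemma mdvd_refl: "mdvd g g" by (simp add: mdvd_def)
lemma mdvd_add_right: "mdvd g e \<Longrightarrow> mdvd g (e + x)"
  unfolding mdvd_def lookup_add by (simp add: trans_le_add1)
lemma mdvd_add_left: "mdvd g e \<Longrightarrow> mdvd g (x + e)"
  unfolding mdvd_def lookup_add by (simp add: trans_le_add2)
lemma mdvd_add: "mdvd g e \<Longrightarrow> mdvd g' e' \<Longrightarrow> mdvd (g + g') (e + e')"
  unfolding mdvd_def lookup_add by (simp add: add_mono)

lemma MI_ideal: "is_ideal (polyring n) (MI n Gx :: 'k::field mpoly set)"
proof -
  have 1: "MI n Gx \<subseteq> (polyring n :: 'k mpoly set)" unfolding MI_def by blast
  have 2: "(0 :: 'k mpoly) \<in> MI n Gx" unfolding MI_def by (simp add: polyring_zero)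
  have 3: "a + b \<in> MI n Gx" if a: "a \<in> MI n Gx" and b: "b \<in> MI n Gx" for a b :: "'k mpoly"
  proof -
    have "\<forall>e\<in>Poly_Mapping.keys (a + b). \<exists>g\<in>Gx. mdvd g e"
    proof
      fix e assume "e \<in> Poly_Mapping.keys (a + b)"
      then have "e \<in> Poly_Mapping.keys a \<union> Poly_Mapping.keys b" using keys_add[of a b] by (rule rev_subsetD)
      then show "\<exists>g\<in>Gx. mdvd g e" using a b unfolding MI_def by blast
    qed
    moreover have "a + b \<in> polyring n" using a b polyring_add unfolding MI_def by blast
    ultimately show ?thesis unfolding MI_def by blast
  qed
  have 4: "r * a \<in> MI n Gx" if r: "r \<in> polyring n" and a: "a \<in> MI n Gx" for r a :: "'k mpoly"
  proof -
    have "\<forall>e\<in>Poly_Mapping.keys (r * a). \<exists>g\<in>Gx. mdvd g e"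
    proof
      fix e assume "e \<in> Poly_Mapping.keys (r * a)"
      then have "e \<in> {x + y | x y. x \<in> Poly_Mapping.keys r \<and> y \<in> Poly_Mapping.keys a}"
        using keys_mult[of r a] by (rule rev_subsetD)
      then obtain x y where "e = x + y" "x \<in> Poly_Mapping.keys r" "y \<in> Poly_Mapping.keys a" by blast
      then show "\<exists>g\<in>Gx. mdvd g e" using a mdvd_add_left unfolding MI_def by blast
    qed
    then show ?thesis using r a polyring_mult unfolding MI_def by blast
  qed
  show ?thesis using 1 2 3 4 by (rule is_idealI)
qed

lemma mon_in_polyring: "Poly_Mapping.keys g \<subseteq> {0..n} \<Longrightarrow> (mon g :: 'k::field mpoly) \<in> polyring n"
  unfolding polyring_def by simp

lemma poly_repr: "f = (\<Sum>e\<in>Poly_Mapping.keys f. Poly_Mapping.single e (Poly_Mapping.lookup f e))"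
proof (rule poly_mapping_eqI)
  fix k
  have "Poly_Mapping.lookup (\<Sum>e\<in>Poly_Mapping.keys f. Poly_Mapping.single e (Poly_Mapping.lookup f e)) k
     = (\<Sum>e\<in>Poly_Mapping.keys f. Poly_Mapping.lookup (Poly_Mapping.single e (Poly_Mapping.lookup f e)) k)"
    by (rule lookup_sum)
  also have "\<dots> = (\<Sum>e\<in>Poly_Mapping.keys f. if e = k then Poly_Mapping.lookup f e else 0)"
    by (rule sum.cong) (auto simp: lookup_single when_def)
  also have "\<dots> = Poly_Mapping.lookup f k"
    by (simp add: in_keys_iff)
  finally show "Poly_Mapping.lookup f k = Poly_Mapping.lookup (\<Sum>e\<in>Poly_Mapping.keys f. Poly_Mapping.single e (Poly_Mapping.lookup f e)) k" by simp
qed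

lemma minus_plus_mdvd: "mdvd g e \<Longrightarrow> (e - g) + g = e"
  by (rule poly_mapping_eqI) (simp add: lookup_add lookup_minus mdvd_def)

lemma MI_sub_ideal_gen:
  assumes "\<forall>g\<in>Gx. Poly_Mapping.keys g \<subseteq> {0..n}"
  shows "MI n Gx \<subseteq> ideal_gen (polyring n) ((mon :: _ \<Rightarrow> 'k::field mpoly) ` Gx)"
proof
  fix f :: "'k mpoly" assume f: "f \<in> MI n Gx"
  let ?J = "ideal_gen (polyring n) ((mon :: _ \<Rightarrow> 'k::field mpoly) ` Gx)"
  have GR: "(mon :: _ \<Rightarrow> 'k::field mpoly) ` Gx \<subseteq> polyring n" using assms mon_in_polyring by blast
  have J: "is_ideal (polyring n) ?J" by (rule ideal_gen_ideal[OF GR is_ideal_R])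
  have "\<forall>e\<in>Poly_Mapping.keys f. Poly_Mapping.single e (Poly_Mapping.lookup f e) \<in> ?J"
  proof
    fix e assume e: "e \<in> Poly_Mapping.keys f"
    obtain g where g: "g \<in> Gx" "mdvd g e" using f e unfolding MI_def by blast
    have ke: "Poly_Mapping.keys e \<subseteq> {0..n}" using f e unfolding MI_def polyring_def by blast
    have "Poly_Mapping.keys (e - g) \<subseteq> Poly_Mapping.keys e" by (auto simp: in_keys_iff lookup_minus)
    then have "Poly_Mapping.single (e - g) (Poly_Mapping.lookup f e) \<in> polyring n"
      using ke unfolding polyring_def by (simp split: if_splits) (meson order_trans)
    moreover have "mon g \<in> ?J"
    proof -
      have "(mon g :: 'k mpoly) \<in> mon ` Gx" using g(1) by (rule imageI)
      then show ?thesis using ideal_gen_sup[of "mon ` Gx" "polyring n"] by (rule rev_subsetD)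
    qed
    ultimately have "Poly_Mapping.single (e - g) (Poly_Mapping.lookup f e) * mon g \<in> ?J"
      by (rule ideal_mult[OF J])
    moreover have "Poly_Mapping.single (e - g) (Poly_Mapping.lookup f e) * mon g = Poly_Mapping.single e (Poly_Mapping.lookup f e)"
      by (simp add: mult_single minus_plus_mdvd[OF g(2)])
    ultimately show "Poly_Mapping.single e (Poly_Mapping.lookup f e) \<in> ?J" by simp
  qed
  then have "(\<Sum>e\<in>Poly_Mapping.keys f. Poly_Mapping.single e (Poly_Mapping.lookup f e)) \<in> ?J" by (rule ideal_sum[OF J])
  then show "f \<in> ?J" by (simp only: poly_repr[of f, symmetric])
qed

lemma ideal_gen_sub_MI:
  assumes True: "\<forall>g\<in>Gx. Poly_Mapping.keys g \<subseteq> {0..n}"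
  shows "ideal_gen (polyring n) ((mon :: _ \<Rightarrow> 'k::field mpoly) ` Gx) \<subseteq> MI n Gx"
proof -
  have "(mon :: _ \<Rightarrow> 'k::field mpoly) ` Gx \<subseteq> MI n Gx"
  proof
    fix x assume "x \<in> (mon :: _ \<Rightarrow> 'k::field mpoly) ` Gx"
    then obtain g where g: "g \<in> Gx" "x = mon g" by blast
    have "\<exists>g'\<in>Gx. mdvd g' g" using g(1) mdvd_refl by blast
    moreover have "mon g \<in> (polyring n :: 'k mpoly set)" using g(1) True mon_in_polyring by blast
    ultimately show "x \<in> MI n Gx" using g unfolding MI_def by simp
  qed
  then show ?thesis by (rule ideal_gen_min[OF MI_ideal])
qed

lemma ideal_gen_eq_MI:
  assumes "\<forall>g\<in>Gx. Poly_Mapping.keys g \<subseteq> {0..n}"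
  shows "ideal_gen (polyring n) ((mon :: _ \<Rightarrow> 'k::field mpoly) ` Gx) = MI n Gx"
  using MI_sub_ideal_gen[OF assms] ideal_gen_sub_MI[OF assms] by (rule antisym[rotated])


definition Gk :: "(nat \<Rightarrow>\<^sub>0 nat) set \<Rightarrow> nat \<Rightarrow> (nat \<Rightarrow>\<^sub>0 nat) set" where
  "Gk Gx k = {sum_list gs | gs. length gs = k \<and> set gs \<subseteq> Gx}"

lemma prod_list_MI:
  assumes "set xs \<subseteq> (MI n Gx :: 'k::field mpoly set)"
  shows "prod_list xs \<in> MI n (Gk Gx (length xs))"
  using assms
proof (induction xs)
  case Nil
  have "(1 :: 'k mpoly) \<in> polyring n" unfolding polyring_def by simp
  moreover have "sum_list [] \<in> Gk Gx 0" unfolding Gk_def by (intro CollectI exI[of _ "[]"]) simp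
  ultimately show ?case unfolding MI_def using mdvd_refl[of 0] by auto
next
  case (Cons x xs)
  then have x: "x \<in> MI n Gx" and IH: "prod_list xs \<in> MI n (Gk Gx (length xs))" by auto
  have "x \<in> polyring n" using x unfolding MI_def by simp
  moreover have "prod_list xs \<in> polyring n" using IH unfolding MI_def by simp
  ultimately have R: "x * prod_list xs \<in> polyring n" by (rule polyring_mult)
  have "\<forall>e\<in>Poly_Mapping.keys (x * prod_list xs). \<exists>g\<in>Gk Gx (length (x # xs)). mdvd g e"
  proof
    fix e assume "e \<in> Poly_Mapping.keys (x * prod_list xs)"
    then have "e \<in> {a + b | a b. a \<in> Poly_Mapping.keys x \<and> b \<in> Poly_Mapping.keys (prod_list xs)}"
      using keys_mult[of x "prod_list xs"] by (rule rev_subsetD)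
    then obtain a b where ab: "e = a + b" "a \<in> Poly_Mapping.keys x" "b \<in> Poly_Mapping.keys (prod_list xs)" by blast
    obtain g1 where g1: "g1 \<in> Gx" "mdvd g1 a" using x ab(2) unfolding MI_def by blast
    obtain g2 where g2: "g2 \<in> Gk Gx (length xs)" "mdvd g2 b" using IH ab(3) unfolding MI_def by blast
    obtain gs where gs: "g2 = sum_list gs" "length gs = length xs" "set gs \<subseteq> Gx" using g2(1) unfolding Gk_def by blast
    have "g1 + g2 = sum_list (g1 # gs)" using gs(1) by simp
    then have "g1 + g2 \<in> Gk Gx (length (x # xs))" unfolding Gk_def using gs g1(1)
      by (intro CollectI exI[of _ "g1 # gs"]) simp
    moreover have "mdvd (g1 + g2) e" using ab(1) mdvd_add[OF g1(2) g2(2)] by simp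
    ultimately show "\<exists>g\<in>Gk Gx (length (x # xs)). mdvd g e" by blast
  qed
  then show ?case using R unfolding MI_def by simp
qed

lemma ideal_pow_sub:
  "ideal_pow (polyring n) (MI n Gx :: 'k::field mpoly set) k \<subseteq> MI n (Gk Gx k)"
  unfolding ideal_pow_def
proof (rule ideal_gen_min[OF MI_ideal])
  show "{prod_list xs |xs. length xs = k \<and> set xs \<subseteq> (MI n Gx :: 'k mpoly set)} \<subseteq> MI n (Gk Gx k)"
  proof
    fix y assume "y \<in> {prod_list xs |xs. length xs = k \<and> set xs \<subseteq> (MI n Gx :: 'k mpoly set)}"
    then obtain xs where xs: "y = prod_list xs" "length xs = k" "set xs \<subseteq> (MI n Gx :: 'k mpoly set)" by blast
    show "y \<in> MI n (Gk Gx k)" using prod_list_MI[OF xs(3)] xs(1,2) by simp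
  qed
qed

lemma mon_pow: "(mon (Poly_Mapping.single i c) :: 'k::field mpoly) ^ k = mon (Poly_Mapping.single i (k * c))"
proof (induction k)
  case 0
  then show ?case by (simp add: one_poly_mapping.abs_eq)
next
  case (Suc k)
  then show ?case by (simp add: mult_single single_add[symmetric] add.commute)
qed

lemma keys_mult_mon:
  assumes "e \<in> Poly_Mapping.keys (f :: 'k::field mpoly)"
  shows "e + d \<in> Poly_Mapping.keys (f * mon d)"
proof -
  have "f * mon d = (\<Sum>x\<in>Poly_Mapping.keys f. Poly_Mapping.single x (Poly_Mapping.lookup f x)) * mon d"
    by (subst poly_repr[of f]) (rule refl)
  also have "\<dots> = (\<Sum>x\<in>Poly_Mapping.keys f. Poly_Mapping.single (x + d) (Poly_Mapping.lookup f x))"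
    by (simp add: sum_distrib_right mult_single)
  finally have eq: "f * mon d = (\<Sum>x\<in>Poly_Mapping.keys f. Poly_Mapping.single (x + d) (Poly_Mapping.lookup f x))" .
  have "Poly_Mapping.lookup (f * mon d) (e + d) = (\<Sum>x\<in>Poly_Mapping.keys f. Poly_Mapping.lookup (Poly_Mapping.single (x + d) (Poly_Mapping.lookup f x)) (e + d))"
    unfolding eq by (rule lookup_sum)
  also have "\<dots> = (\<Sum>x\<in>Poly_Mapping.keys f. if x = e then Poly_Mapping.lookup f x else 0)"
    by (rule sum.cong) (auto simp: lookup_single when_def)
  also have "\<dots> = Poly_Mapping.lookup f e" using assms by simp
  finally show ?thesis using assms by (simp add: in_keys_iff)
qed



lemma lk_single: "Poly_Mapping.lookup (Poly_Mapping.single i a) l = (if i = l then a else 0)"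
  by (simp add: lookup_single when_def)

lemma lookup_sum_list: "Poly_Mapping.lookup (sum_list gs) i = sum_list (map (\<lambda>g. Poly_Mapping.lookup g i) gs)"
  by (induction gs) (simp_all add: lookup_add)

lemma lookup_le_sum_list:
  fixes gs :: "(nat \<Rightarrow>\<^sub>0 nat) list"
  assumes "g \<in> set gs"
  shows "Poly_Mapping.lookup g i \<le> Poly_Mapping.lookup (sum_list gs) i"
  using assms
proof (induction gs)
  case Nil
  then show ?case by simp
next
  case (Cons a gs)
  show ?case
  proof (cases "g = a")
    case True
    then show ?thesis by (simp add: lookup_add)
  next
    case False
    then have "Poly_Mapping.lookup g i \<le> Poly_Mapping.lookup (sum_list gs) i" using Cons by simp
    then show ?thesis by (simp add: lookup_add)
  qed
qed

definition Yd :: "nat \<Rightarrow> (nat \<Rightarrow>\<^sub>0 nat) \<Rightarrow> nat" where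
  "Yd p x = (\<Sum>i\<in>{1..<p}. Poly_Mapping.lookup x i)"

lemma Yd_add: "Yd p (a + b) = Yd p a + Yd p b"
  unfolding Yd_def by (simp add: lookup_add sum.distrib)

lemma Yd_sum_list: "Yd p (sum_list gs) = sum_list (map (Yd p) gs)"
  by (induction gs) (simp_all add: Yd_add, simp add: Yd_def)

lemma Yd_mono: "(\<And>i. Poly_Mapping.lookup a i \<le> Poly_Mapping.lookup b i) \<Longrightarrow> Yd p a \<le> Yd p b"
  unfolding Yd_def by (rule sum_mono) simp

lemma Yd_single_in: "i \<in> {1..<p} \<Longrightarrow> Yd p (Poly_Mapping.single i c) = c"
  unfolding Yd_def lk_single by simp

lemma Yd_single_out: "i \<notin> {1..<p} \<Longrightarrow> Yd p (Poly_Mapping.single i c) = 0"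
  unfolding Yd_def lk_single by (rule sum.neutral) auto

definition GA :: "nat \<Rightarrow> nat \<Rightarrow> nat \<Rightarrow> (nat \<Rightarrow>\<^sub>0 nat) set" where
  "GA p Q r = {Poly_Mapping.single i 1 + Poly_Mapping.single p Q | i. r \<le> i \<and> i \<le> p}"
definition GB :: "nat \<Rightarrow> nat \<Rightarrow> nat \<Rightarrow> nat \<Rightarrow> nat set \<Rightarrow> (nat \<Rightarrow>\<^sub>0 nat) set" where
  "GB p S n b Js = {Poly_Mapping.single j 1 + Poly_Mapping.single p S + Poly_Mapping.single n b | j. j \<in> Js}"
definition GD :: "nat \<Rightarrow> (nat \<Rightarrow>\<^sub>0 nat) set" where
  "GD p = {Poly_Mapping.single i 1 + Poly_Mapping.single j 1 | i j. 1 \<le> i \<and> i \<le> j \<and> j \<le> p - 1}"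
definition GX :: "nat \<Rightarrow> nat \<Rightarrow> nat \<Rightarrow> nat \<Rightarrow> nat \<Rightarrow> nat \<Rightarrow> nat \<Rightarrow> nat set \<Rightarrow> (nat \<Rightarrow>\<^sub>0 nat) set" where
  "GX p n Q r S b v Js = GA p Q r \<union> GB p S n b Js \<union> {Poly_Mapping.single n v} \<union> GD p"

lemma Y2:
  assumes "Yd p e \<ge> 2"
  shows "\<exists>g\<in>GD p. mdvd g e"
proof -
  have "Yd p e \<noteq> 0" using assms by simp
  then obtain i where i: "i \<in> {1..<p}" "Poly_Mapping.lookup e i \<noteq> 0"
    unfolding Yd_def by (rule sum.not_neutral_contains_not_neutral)
  show ?thesis
  proof (cases "Poly_Mapping.lookup e i \<ge> 2")
    case True
    have "Poly_Mapping.single i 1 + Poly_Mapping.single i 1 \<in> GD p"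
      unfolding GD_def using i(1) by (intro CollectI exI[of _ i]) auto
    moreover have "mdvd (Poly_Mapping.single i 1 + Poly_Mapping.single i 1) e"
      unfolding mdvd_def using True by (simp add: lookup_add lk_single)
    ultimately show ?thesis by blast
  next
    case False
    then have ei: "Poly_Mapping.lookup e i = 1" using i(2) by simp
    have "Yd p e = Poly_Mapping.lookup e i + (\<Sum>j\<in>{1..<p} - {i}. Poly_Mapping.lookup e j)"
      unfolding Yd_def using i(1) by (simp add: sum.remove)
    then have "(\<Sum>j\<in>{1..<p} - {i}. Poly_Mapping.lookup e j) \<noteq> 0" using assms ei by linarith
    then obtain j where j: "j \<in> {1..<p} - {i}" "Poly_Mapping.lookup e j \<noteq> 0"
      by (rule sum.not_neutral_contains_not_neutral)
    have "Poly_Mapping.single (min i j) 1 + Poly_Mapping.single (max i j) 1 \<in> GD p"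
      unfolding GD_def using i(1) j(1) by (intro CollectI exI[of _ "min i j"] exI[of _ "max i j"]) auto
    moreover have "mdvd (Poly_Mapping.single (min i j) 1 + Poly_Mapping.single (max i j) 1) e"
      unfolding mdvd_def using ei j by (auto simp: lookup_add lk_single min_def max_def)
    ultimately show ?thesis by blast
  qed
qed


lemma nat_mem_le_sum_list: "(x::nat) \<in> set xs \<Longrightarrow> x \<le> sum_list xs"
  by (induction xs) auto

lemma sum_list_const_nat: "\<forall>x\<in>set xs. f x = (c::nat) \<Longrightarrow> sum_list (map f xs) = length xs * c"
  by (induction xs) auto

lemma lk2: "Poly_Mapping.lookup (Poly_Mapping.single a x + Poly_Mapping.single b y) l
   = (if a = l then x else 0) + (if b = l then y else 0)"
  by (simp add: lookup_add lk_single)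

lemma lk3: "Poly_Mapping.lookup (Poly_Mapping.single a x + Poly_Mapping.single b y + Poly_Mapping.single c z) l
   = (if a = l then x else 0) + (if b = l then y else 0) + (if c = l then z else 0)"
  by (simp add: lookup_add lk_single)

lemma le_from_mdvd:
  assumes "g \<in> set gs" "mdvd (sum_list gs) (e + h)"
  shows "Poly_Mapping.lookup g i \<le> Poly_Mapping.lookup e i + Poly_Mapping.lookup h i"
proof -
  have "Poly_Mapping.lookup g i \<le> Poly_Mapping.lookup (sum_list gs) i" by (rule lookup_le_sum_list[OF assms(1)])
  also have "\<dots> \<le> Poly_Mapping.lookup (e + h) i" using assms(2) unfolding mdvd_def by blast
  finally show ?thesis by (simp add: lookup_add)
qed

lemma comb1:
  assumes p: "1 \<le> p" "p < n" and r: "1 \<le> r" "r \<le> p" and Js: "Js \<subseteq> {..p}" and bv: "b \<le> v"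
    and gs: "set gs \<subseteq> GX p n Q r S b v Js" "length gs = Suc k"
    and c: "b \<le> Poly_Mapping.lookup e n"
    and dv: "mdvd (sum_list gs) (e + Poly_Mapping.single n (k * v))"
  shows "\<exists>g\<in>GX p n Q r S b v Js. mdvd g e"
proof (cases "\<exists>g\<in>set gs. g \<noteq> Poly_Mapping.single n v")
  case True
  then obtain g where g: "g \<in> set gs" "g \<noteq> Poly_Mapping.single n v" by blast
  have gX: "g \<in> GX p n Q r S b v Js" using g(1) gs(1) by blast
  have le: "Poly_Mapping.lookup g i \<le> Poly_Mapping.lookup e i + (if n = i then k * v else 0)" for i
    using le_from_mdvd[OF g(1) dv, of i] by (simp add: lk_single)
  have gn: "Poly_Mapping.lookup g n \<le> Poly_Mapping.lookup e n"
  proof -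
    consider "g \<in> GA p Q r" | "g \<in> GB p S n b Js" | "g \<in> GD p" using gX g(2) unfolding GX_def by blast
    then show ?thesis
    proof cases
      case 1
      then obtain i where "g = Poly_Mapping.single i 1 + Poly_Mapping.single p Q" "i \<le> p" unfolding GA_def by blast
      then show ?thesis using p by (simp add: lk2)
    next
      case 2
      then obtain j where "g = Poly_Mapping.single j 1 + Poly_Mapping.single p S + Poly_Mapping.single n b" "j \<in> Js" unfolding GB_def by blast
      then show ?thesis using p Js c by (auto simp: lk3)
    next
      case 3
      then obtain i j where ij: "g = Poly_Mapping.single i 1 + Poly_Mapping.single j 1" "i \<le> j" "j \<le> p - 1" unfolding GD_def by blast
      then have "i \<noteq> n" "j \<noteq> n" using p by auto
      then show ?thesis using ij(1) by (simp add: lk2)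
    qed
  qed
  have "mdvd g e" unfolding mdvd_def
  proof
    fix i show "Poly_Mapping.lookup g i \<le> Poly_Mapping.lookup e i"
      using le[of i] gn by (cases "i = n") auto
  qed
  then show ?thesis using gX by blast
next
  case False
  then have all: "\<forall>g\<in>set gs. Poly_Mapping.lookup g n = v" by auto
  have "Poly_Mapping.lookup (sum_list gs) n = Suc k * v"
    unfolding lookup_sum_list using sum_list_const_nat[OF all] gs(2) by simp
  moreover have "Poly_Mapping.lookup (sum_list gs) n \<le> Poly_Mapping.lookup e n + k * v"
    using dv unfolding mdvd_def by (metis lookup_add lk_single)
  ultimately have ve: "v \<le> Poly_Mapping.lookup e n" by simp
  have "mdvd (Poly_Mapping.single n v) e" unfolding mdvd_def lk_single using ve by auto
  moreover have "Poly_Mapping.single n v \<in> GX p n Q r S b v Js" unfolding GX_def by blast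
  ultimately show ?thesis by blast
qed


lemma comb2:
  assumes p: "1 \<le> p" "p < n" and r: "1 \<le> r" "r \<le> p" and Js: "Js \<subseteq> {..p}" and bv: "b \<le> v"
    and gs: "set gs \<subseteq> GX p n Q r S b v Js" "length gs = Suc k"
    and c: "Poly_Mapping.lookup e n < b"
    and dv: "mdvd (sum_list gs) (e + Poly_Mapping.single p (k * (Q + 1)))"
  shows "\<exists>g\<in>GX p n Q r S b v Js. mdvd g e"
proof -
  have le: "Poly_Mapping.lookup g i \<le> Poly_Mapping.lookup e i + Poly_Mapping.lookup (Poly_Mapping.single p (k * (Q + 1))) i"
    if "g \<in> set gs" for g i
    using le_from_mdvd[OF that dv, of i] .
  have AD: "g \<in> GA p Q r \<or> g \<in> GD p" if g: "g \<in> set gs" for g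
  proof -
    have gn: "Poly_Mapping.lookup g n < b" using le[OF g, of n] c p by (simp add: lk_single)
    have "g \<in> GX p n Q r S b v Js" using g gs(1) by blast
    moreover have "g \<notin> GB p S n b Js"
    proof
      assume "g \<in> GB p S n b Js"
      then obtain j where "g = Poly_Mapping.single j 1 + Poly_Mapping.single p S + Poly_Mapping.single n b" "j \<in> Js" unfolding GB_def by blast
      moreover have "j \<noteq> n" using \<open>j \<in> Js\<close> Js p by auto
      ultimately have "Poly_Mapping.lookup g n = b" using p by (simp add: lk3)
      then show False using gn by simp
    qed
    moreover have "g \<noteq> Poly_Mapping.single n v" using gn bv by (auto simp: lk_single)
    ultimately show ?thesis unfolding GX_def by blast
  qed
  show ?thesis
  proof (cases "Yd p e \<ge> 2")
    case True
    then show ?thesis using Y2 unfolding GX_def by blast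
  next
    case False
    have "sum_list (map (Yd p) gs) = Yd p (sum_list gs)" by (rule Yd_sum_list[symmetric])
    also have "\<dots> \<le> Yd p (e + Poly_Mapping.single p (k * (Q + 1)))"
      by (rule Yd_mono) (use dv in \<open>simp add: mdvd_def\<close>)
    also have "\<dots> = Yd p e" by (simp add: Yd_add Yd_single_out)
    finally have N1: "sum_list (map (Yd p) gs) \<le> 1" using False by simp
    have noD: "g \<notin> GD p" if g: "g \<in> set gs" for g
    proof
      assume "g \<in> GD p"
      then obtain i j where ij: "g = Poly_Mapping.single i 1 + Poly_Mapping.single j 1" "1 \<le> i" "i \<le> j" "j \<le> p - 1"
        unfolding GD_def by blast
      then have "i \<in> {1..<p}" "j \<in> {1..<p}" using p by auto
      then have "Yd p g = 2" using ij(1) by (simp add: Yd_add Yd_single_in)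
      moreover have "Yd p g \<le> sum_list (map (Yd p) gs)" using g by (intro nat_mem_le_sum_list) simp
      ultimately show False using N1 by simp
    qed
    have A: "g \<in> GA p Q r" if "g \<in> set gs" for g using AD[OF that] noD[OF that] by blast
    have Aform: "Poly_Mapping.lookup g p + Yd p g = Q + 1" if g: "g \<in> set gs" for g
    proof -
      obtain i where i: "g = Poly_Mapping.single i 1 + Poly_Mapping.single p Q" "r \<le> i" "i \<le> p"
        using A[OF g] unfolding GA_def by blast
      show ?thesis
      proof (cases "i = p")
        case True
        then show ?thesis using i(1) by (simp add: lk2 Yd_add Yd_single_out)
      next
        case False
        then have "i \<in> {1..<p}" using i r by auto
        then show ?thesis using i(1) False by (simp add: lk2 Yd_add Yd_single_out Yd_single_in)
      qed
    qed
    have "sum_list (map (\<lambda>g. Poly_Mapping.lookup g p + Yd p g) gs) = Suc k * (Q + 1)"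
      using sum_list_const_nat[of gs "\<lambda>g. Poly_Mapping.lookup g p + Yd p g" "Q + 1"] Aform gs(2) by simp
    then have tot: "Poly_Mapping.lookup (sum_list gs) p + sum_list (map (Yd p) gs) = Suc k * (Q + 1)"
      unfolding lookup_sum_list by (simp add: sum_list_addf)
    have "Poly_Mapping.lookup (sum_list gs) p \<le> Poly_Mapping.lookup e p + k * (Q + 1)"
      using dv unfolding mdvd_def by (metis lookup_add lk_single)
    then have ep: "Q + 1 \<le> Poly_Mapping.lookup e p + sum_list (map (Yd p) gs)" using tot by simp
    show ?thesis
    proof (cases "sum_list (map (Yd p) gs) = 0")
      case True
      then have ep1: "Q + 1 \<le> Poly_Mapping.lookup e p" using ep by (simp del: sum_list_eq_0_iff)
      have "Poly_Mapping.single p 1 + Poly_Mapping.single p Q \<in> GA p Q r" unfolding GA_def using r by blast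
      moreover have "mdvd (Poly_Mapping.single p 1 + Poly_Mapping.single p Q) e"
        unfolding mdvd_def lk2 using ep1 by auto
      ultimately show ?thesis unfolding GX_def by blast
    next
      case False
      then have N: "sum_list (map (Yd p) gs) = 1" using N1 by (simp del: sum_list_eq_0_iff)
      then have ep0: "Q \<le> Poly_Mapping.lookup e p" using ep by simp
      from False obtain g where g: "g \<in> set gs" "Yd p g \<noteq> 0" by auto
      obtain i where i: "g = Poly_Mapping.single i 1 + Poly_Mapping.single p Q" "r \<le> i" "i \<le> p"
        using A[OF g(1)] unfolding GA_def by blast
      have ip: "i \<noteq> p"
      proof
        assume "i = p"
        then have "Yd p g = 0" using i(1) by (simp add: Yd_add Yd_single_out)
        then show False using g(2) by simp
      qed
      have "Poly_Mapping.lookup g i \<le> Poly_Mapping.lookup e i" using le[OF g(1), of i] ip by (simp add: lk_single)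
      then have ei: "1 \<le> Poly_Mapping.lookup e i" using i(1) ip by (simp add: lk2)
      have "mdvd g e" unfolding mdvd_def
      proof
        fix l show "Poly_Mapping.lookup g l \<le> Poly_Mapping.lookup e l"
          using i(1) ip ei ep0 by (cases "l = i"; cases "l = p") (simp_all add: lk2)
      qed
      moreover have "g \<in> GX p n Q r S b v Js" using g(1) gs(1) by blast
      ultimately show ?thesis by blast
    qed
  qed
qed


lemma keys_GX:
  assumes "p < n" "Js \<subseteq> {..p}"
  shows "\<forall>g\<in>GX p n Q r S b v Js. Poly_Mapping.keys g \<subseteq> {0..n}"
proof
  fix g assume g: "g \<in> GX p n Q r S b v Js"
  have ks: "Poly_Mapping.keys (Poly_Mapping.single i c) \<subseteq> {i}" for i and c :: nat by simp
  have ka: "Poly_Mapping.keys (x + y) \<subseteq> Poly_Mapping.keys x \<union> Poly_Mapping.keys y" for x y :: "nat \<Rightarrow>\<^sub>0 nat"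
    by (rule keys_add)
  consider "g \<in> GA p Q r" | "g \<in> GB p S n b Js" | "g = Poly_Mapping.single n v" | "g \<in> GD p"
    using g unfolding GX_def by blast
  then show "Poly_Mapping.keys g \<subseteq> {0..n}"
  proof cases
    case 1
    then obtain i where i: "g = Poly_Mapping.single i 1 + Poly_Mapping.single p Q" "i \<le> p" unfolding GA_def by blast
    have "x = i \<or> x = p" if "x \<in> Poly_Mapping.keys g" for x
      using that i(1) by (auto simp: in_keys_iff lk2 split: if_splits)
    then show ?thesis using i(2) assms(1) by fastforce
  next
    case 2
    then obtain j where j: "g = Poly_Mapping.single j 1 + Poly_Mapping.single p S + Poly_Mapping.single n b" "j \<in> Js" unfolding GB_def by blast
    have "x = j \<or> x = p \<or> x = n" if "x \<in> Poly_Mapping.keys g" for x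
      using that j(1) by (auto simp: in_keys_iff lk3 split: if_splits)
    then show ?thesis using j(2) assms by fastforce
  next
    case 3
    then show ?thesis by simp
  next
    case 4
    then obtain i j where ij: "g = Poly_Mapping.single i 1 + Poly_Mapping.single j 1" "i \<le> j" "j \<le> p - 1" unfolding GD_def by blast
    have "x = i \<or> x = j" if "x \<in> Poly_Mapping.keys g" for x
      using that ij(1) by (auto simp: in_keys_iff lk2 split: if_splits)
    then show ?thesis using ij(2,3) assms(1) by fastforce
  qed
qed

lemma ideal_sub: "is_ideal R J \<Longrightarrow> J \<subseteq> R"
  unfolding is_ideal_def by (elim conjE)

lemma ideal_pow_one:
  assumes "is_ideal R I"
  shows "ideal_pow R I 1 = I"
proof -
  have "{prod_list xs | xs. length xs = 1 \<and> set xs \<subseteq> I} = I"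
  proof
    show "{prod_list xs | xs. length xs = 1 \<and> set xs \<subseteq> I} \<subseteq> I"
    proof
      fix y assume "y \<in> {prod_list xs | xs. length xs = 1 \<and> set xs \<subseteq> I}"
      then obtain xs where xs: "y = prod_list xs" "length xs = 1" "set xs \<subseteq> I" by blast
      then obtain a where "xs = [a]" by (metis One_nat_def length_0_conv length_Suc_conv)
      then show "y \<in> I" using xs by simp
    qed
  next
    show "I \<subseteq> {prod_list xs | xs. length xs = 1 \<and> set xs \<subseteq> I}"
    proof
      fix a assume "a \<in> I"
      then show "a \<in> {prod_list xs | xs. length xs = 1 \<and> set xs \<subseteq> I}"
        by (intro CollectI exI[of _ "[a]"]) simp
    qed
  qed
  then have "ideal_pow R I 1 = ideal_gen R I" unfolding ideal_pow_def by simp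
  also have "\<dots> = I"
  proof
    show "ideal_gen R I \<subseteq> I" by (rule ideal_gen_min[OF assms]) simp
    show "I \<subseteq> ideal_gen R I" by (rule ideal_gen_sup)
  qed
  finally show ?thesis .
qed

lemma rr_closed:
  assumes p: "1 \<le> p" "p < n" and r: "1 \<le> r" "r \<le> p" and Js: "Js \<subseteq> {..p}" and bv: "b \<le> v"
  shows "ratliff_rush (polyring n) (ideal_gen (polyring n) ((mon :: _ \<Rightarrow> 'k::field mpoly) ` GX p n Q r S b v Js))
       = ideal_gen (polyring n) ((mon :: _ \<Rightarrow> 'k::field mpoly) ` GX p n Q r S b v Js)"
proof -
  let ?G = "GX p n Q r S b v Js"
  let ?R = "polyring n :: 'k mpoly set"
  let ?I = "ideal_gen ?R ((mon :: _ \<Rightarrow> 'k::field mpoly) ` ?G)"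
  have kG: "\<forall>g\<in>?G. Poly_Mapping.keys g \<subseteq> {0..n}" using keys_GX[OF p(2) Js] .
  have IMI: "?I = MI n ?G" by (rule ideal_gen_eq_MI[OF kG])
  have Iid: "is_ideal ?R ?I" unfolding IMI by (rule MI_ideal)
  have sub1: "ratliff_rush ?R ?I \<subseteq> ?I"
  proof
    fix x assume "x \<in> ratliff_rush ?R ?I"
    then obtain k where k: "x \<in> colon ?R (ideal_pow ?R ?I (k + 1)) (ideal_pow ?R ?I k)"
      unfolding ratliff_rush_def by blast
    have xR: "x \<in> ?R" using k unfolding colon_def by blast
    have "\<forall>e\<in>Poly_Mapping.keys x. \<exists>g\<in>?G. mdvd g e"
    proof
      fix e assume e: "e \<in> Poly_Mapping.keys x"
      define i where "i = (if b \<le> Poly_Mapping.lookup e n then n else p)"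
      define c where "c = (if b \<le> Poly_Mapping.lookup e n then v else Q + 1)"
      have hG: "Poly_Mapping.single i c \<in> ?G"
      proof (cases "b \<le> Poly_Mapping.lookup e n")
        case True
        then show ?thesis unfolding i_def c_def GX_def by simp
      next
        case False
        have "Poly_Mapping.single p 1 + Poly_Mapping.single p Q \<in> GA p Q r" unfolding GA_def using r by blast
        then show ?thesis using False unfolding i_def c_def GX_def by (simp add: single_add[symmetric])
      qed
      have "mon (Poly_Mapping.single i c) \<in> ?I"
      proof -
        have "(mon (Poly_Mapping.single i c) :: 'k mpoly) \<in> mon ` ?G" using hG by (rule imageI)
        then show ?thesis using ideal_gen_sup[of "mon ` ?G" ?R] by (rule rev_subsetD)
      qed
      then have rep: "set (replicate k (mon (Poly_Mapping.single i c) :: 'k mpoly)) \<subseteq> ?I" by (simp add: set_replicate_conv_if)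
      have "prod_list (replicate k (mon (Poly_Mapping.single i c) :: 'k mpoly)) \<in> {prod_list xs | xs. length xs = k \<and> set xs \<subseteq> ?I}"
        using rep by (intro CollectI exI[of _ "replicate k (mon (Poly_Mapping.single i c) :: 'k mpoly)"]) simp
      then have "prod_list (replicate k (mon (Poly_Mapping.single i c) :: 'k mpoly)) \<in> ideal_pow ?R ?I k"
        unfolding ideal_pow_def by (rule rev_subsetD[OF _ ideal_gen_sup])
      then have "(mon (Poly_Mapping.single i c) :: 'k mpoly) ^ k \<in> ideal_pow ?R ?I k" by (simp add: prod_list_replicate)
      then have "(mon (Poly_Mapping.single i (k * c)) :: 'k mpoly) \<in> ideal_pow ?R ?I k" by (simp add: mon_pow)
      then have "x * mon (Poly_Mapping.single i (k * c)) \<in> ideal_pow ?R ?I (k + 1)"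
        using k unfolding colon_def by blast
      then have "x * mon (Poly_Mapping.single i (k * c)) \<in> MI n (Gk ?G (k + 1))"
        using ideal_pow_sub[of n ?G "k + 1"] unfolding IMI by blast
      moreover have "e + Poly_Mapping.single i (k * c) \<in> Poly_Mapping.keys (x * mon (Poly_Mapping.single i (k * c)))"
        by (rule keys_mult_mon[OF e])
      ultimately obtain g' where g': "g' \<in> Gk ?G (k + 1)" "mdvd g' (e + Poly_Mapping.single i (k * c))"
        unfolding MI_def by blast
      then obtain gs where gs: "g' = sum_list gs" "length gs = Suc k" "set gs \<subseteq> ?G" unfolding Gk_def by auto
      show "\<exists>g\<in>?G. mdvd g e"
      proof (cases "b \<le> Poly_Mapping.lookup e n")
        case True
        then have "mdvd (sum_list gs) (e + Poly_Mapping.single n (k * v))" using g'(2) gs(1) unfolding i_def c_def by simp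
        then show ?thesis by (rule comb1[OF p r Js bv gs(3) gs(2) True])
      next
        case False
        then have "mdvd (sum_list gs) (e + Poly_Mapping.single p (k * (Q + 1)))" using g'(2) gs(1) unfolding i_def c_def by simp
        then show ?thesis using False by (intro comb2[OF p r Js bv gs(3) gs(2)]) simp_all
      qed
    qed
    then show "x \<in> ?I" unfolding IMI MI_def using xR by blast
  qed
  have sub2: "?I \<subseteq> ratliff_rush ?R ?I"
  proof
    fix x assume x: "x \<in> ?I"
    have xR: "x \<in> ?R" using ideal_sub[OF Iid] x by (rule subsetD)
    have "x \<in> colon ?R (ideal_pow ?R ?I (1 + 1)) (ideal_pow ?R ?I 1)"
      unfolding colon_def ideal_pow_one[OF Iid]
    proof (intro CollectI conjI ballI)
      show "x \<in> ?R" by (rule xR)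
    next
      fix y assume y: "y \<in> ?I"
      have "prod_list [x, y] \<in> {prod_list xs | xs. length xs = 1 + 1 \<and> set xs \<subseteq> ?I}"
        using x y by (intro CollectI exI[of _ "[x, y]"]) simp
      then have "prod_list [x, y] \<in> ideal_pow ?R ?I (1 + 1)" unfolding ideal_pow_def by (rule rev_subsetD[OF _ ideal_gen_sup])
      then show "x * y \<in> ideal_pow ?R ?I (1 + 1)" by simp
    qed
    then show "x \<in> ratliff_rush ?R ?I" unfolding ratliff_rush_def by blast
  qed
  show ?thesis using sub1 sub2 by (rule antisym)
qed

lemma var_mon: "(var i :: 'k::field mpoly) = mon (Poly_Mapping.single i 1)"
  by (simp add: var_def)

lemma var_pow: "(var i :: 'k::field mpoly) ^ a = mon (Poly_Mapping.single i a)"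
  using mon_pow[of i 1 a] by (simp add: var_def)

lemma vA: "(var i :: 'k::field mpoly) * var p ^ Q = mon (Poly_Mapping.single i 1 + Poly_Mapping.single p Q)"
  by (simp only: var_pow) (simp add: var_def mult_single)
lemma vB: "(var j :: 'k::field mpoly) * var p ^ S * var n ^ b
   = mon (Poly_Mapping.single j 1 + Poly_Mapping.single p S + Poly_Mapping.single n b)"
  by (simp only: var_pow) (simp add: var_def mult_single)
lemma vD: "(var i :: 'k::field mpoly) * var j = mon (Poly_Mapping.single i 1 + Poly_Mapping.single j 1)"
  by (simp add: var_def mult_single)

lemma gen_eq:
  "({var i * var p ^ Q | i. r \<le> i \<and> i \<le> p}
    \<union> {var j * var p ^ S * var n ^ b | j. P j}
    \<union> {var n ^ v}
    \<union> {var i * var j | i j. 1 \<le> i \<and> i \<le> j \<and> j \<le> p - 1})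
   = (mon :: _ \<Rightarrow> 'k::field mpoly) ` GX p n Q r S b v {j. P j}"
proof -
  have A: "{(var i :: 'k mpoly) * var p ^ Q | i. r \<le> i \<and> i \<le> p} = mon ` GA p Q r"
    unfolding GA_def vA by blast
  have B: "{(var j :: 'k mpoly) * var p ^ S * var n ^ b | j. P j} = mon ` GB p S n b {j. P j}"
    unfolding GB_def vB by blast
  have C: "{(var n :: 'k mpoly) ^ v} = mon ` {Poly_Mapping.single n v}"
    by (simp add: var_pow)
  have D: "{(var i :: 'k mpoly) * var j | i j. 1 \<le> i \<and> i \<le> j \<and> j \<le> p - 1} = mon ` GD p"
    unfolding GD_def vD by blast
  show ?thesis unfolding GX_def image_Un A B C D ..
qed

theorem mainTheorem1:
  fixes n :: nat and m :: "nat \<Rightarrow> nat" and d :: nat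
    and w z :: nat and lam mu :: int
  assumes n2: "n \<ge> 2"
    and arith: "d > 0" "\<forall>i\<le>n - 1. m i = m 0 + i * d"
    and pos: "\<forall>i\<le>n. m i > 0"
    and gcd1: "Gcd (m ` {0..n}) = 1"
    and minimal: "\<forall>i\<le>n. \<not> in_sg m ({0..n} - {i}) (int (m i))"
    and w_z: "w \<le> upsilon m n - 1" "z \<le> uu m n - 1"
    and lam_mu: "lam \<ge> 1" "mu \<ge> 0"
    and eq1: "gg m (n - 1) (uu m n) = lam * int (m 0) + int w * int (m n)"
    and eq2: "int (upsilon m n * m n) = mu * int (m 0) + gg m (n - 1) z"
  shows
    "let p = n - 1; u = uu m n; v = upsilon m n;
         q = qq p u; r = rr p u; qz = qq p z; rz = rr p z;
         \<epsilon> = (if r > rz then 0 else 1 :: nat);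
         I = ideal_gen (polyring n :: 'k::field mpoly set)
              ({var i * var p ^ nat q | i. r \<le> i \<and> i \<le> p}
             \<union> {var j * var p ^ nat (q - qz - int \<epsilon>) * var n ^ (v - w) | j.
                    int (\<epsilon> * p + r) - int rz \<le> int j \<and> j \<le> p}
             \<union> {var n ^ v}
             \<union> {var i * var j | i j. 1 \<le> i \<and> i \<le> j \<and> j \<le> p - 1})
     in ratliff_rush (polyring n) I = I"
proof -
  let ?p = "n - 1"
  let ?u = "uu m n"
  let ?v = "upsilon m n"
  let ?r = "rr ?p ?u"
  have p: "1 \<le> ?p" "?p < n" using n2 by auto
  have r1: "1 \<le> ?r" unfolding rr_def by simp
  have r2: "?r \<le> ?p"
  proof -
    have h1: "0 \<le> (int ?u - 1) mod int ?p" using p by simp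
    have h2: "(int ?u - 1) mod int ?p < int ?p" using p by simp
    have "nat ((int ?u - 1) mod int ?p) < ?p" using h1 h2 by (simp add: nat_less_iff)
    then show ?thesis unfolding rr_def by linarith
  qed
  show ?thesis
    unfolding Let_def gen_eq
    by (rule rr_closed[OF p r1 r2]) auto
qed

end
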